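(* Let $\tilde f$ be analytic on $[-1,1]$ and let $F=[f_{k,\ell}]$ be the coefficient matrix of $f(t,s)=\tilde f(t)\Theta(t-s)$. For every fixed $m\in\mathbb{Z}$, $|f_{\ell+m,\ell}|=O(1/\ell)$ as $\ell\to\infty$.
   Context: Let $\{p_k\}_{k\ge0}$ be the orthonormal Legendre polynomials on $[-1,1]$: $p_k$ has exact degree $k$, positive leading coefficient, and $\int_{-1}^1 p_k(t)p_\ell(t)\,dt=\delta_{k\ell}$. Let $\Theta$ be the Heaviside function, $\Theta(x)=0$ for $x<0$ and $\Theta(x)=1$ for $x\ge0$. The coefficient matrix of a bounded function $h$ on $[-1,1]^2$ is the infinite matrix $H=[h_{k,\ell}]_{k,\ell\ge0}$ with $h_{k,\ell}=\int_{-1}^1\int_{-1}^1 h(\tau,\rho)p_k(\tau)p_\ell(\rho)\,d\rho\,d\tau$. *)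

theory Defs
  imports "HOL-Complex_Analysis.Complex_Analysis" "HOL-Computational_Algebra.Polynomial"
    "HOL-Library.Landau_Symbols"
begin

definition heaviside :: "real \<Rightarrow> real" where
  "heaviside x = (if x < 0 then 0 else 1)"

definition orthonormal_legendre :: "(nat \<Rightarrow> real poly) \<Rightarrow> bool" where
  "orthonormal_legendre p \<longleftrightarrow>
     (\<forall>k. degree (p k) = k \<and> lead_coeff (p k) > 0) \<and>
     (\<forall>k l. integral {-1..1} (\<lambda>t. poly (p k) t * poly (p l) t) = (if k = l then 1 else 0))"

definition coeff_matrix :: "(nat \<Rightarrow> real poly) \<Rightarrow> (real \<Rightarrow> real \<Rightarrow> real) \<Rightarrow> nat \<Rightarrow> nat \<Rightarrow> real" where
  "coeff_matrix p h k l =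
     integral {-1..1} (\<lambda>\<tau>. integral {-1..1} (\<lambda>\<rho>. h \<tau> \<rho> * poly (p k) \<tau> * poly (p l) \<rho>))"

definition real_analytic_on_interval :: "(real \<Rightarrow> real) \<Rightarrow> bool" where
  "real_analytic_on_interval f \<longleftrightarrow>
     (\<exists>g. g analytic_on (complex_of_real ` {-1..1}) \<and>
          (\<forall>x\<in>{-1..1}. g (complex_of_real x) = complex_of_real (f x)))"

end

theory Submission imports Defs begin

definition pint :: "real poly \<Rightarrow> real poly" where
  "pint q = (\<Sum>i\<le>degree q. monom (coeff q i / real (Suc i)) (Suc i))"

lemma coeff_pint_Suc: "coeff (pint q) (Suc n) = coeff q n / real (Suc n)"
  unfolding pint_def coeff_sum coeff_monom
  by (cases "n \<le> degree q") (auto simp: coeff_eq_0)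

lemma coeff_pint_0: "coeff (pint q) 0 = 0"
  unfolding pint_def coeff_sum coeff_monom by simp

lemma pderiv_pint: "pderiv (pint q) = q"
  by (rule poly_eqI) (simp add: coeff_pderiv coeff_pint_Suc)

lemma degree_pint: "degree (pint q) \<le> Suc (degree q)"
  unfolding pint_def by (rule degree_sum_le) (auto intro: order_trans[OF degree_monom_le])

lemma ftc_poly: "integral {-1..1} (poly (pderiv (A::real poly))) = poly A 1 - poly A (-1)"
proof -
  have "(poly (pderiv A) has_integral (poly A 1 - poly A (-1))) {-1..1}"
    by (rule fundamental_theorem_of_calculus[of "-1" 1 "poly A" "poly (pderiv A)"])
       (auto simp: has_real_derivative_iff_has_vector_derivative[symmetric] intro!: DERIV_subset[OF poly_DERIV])
  thus ?thesis by (rule integral_unique)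
qed


definition ip :: "real poly \<Rightarrow> real poly \<Rightarrow> real" where
  "ip a b = integral {-1..1} (\<lambda>t. poly a t * poly b t)"

lemma int_pp: "(\<lambda>t. poly a t * poly b t) integrable_on {-1..1::real}"
  by (intro integrable_continuous_real continuous_intros)

lemma ip_add: "ip a (b + c) = ip a b + ip a c"
  unfolding ip_def by (simp add: distrib_left integral_add[OF int_pp int_pp])

lemma ip_diff: "ip a (b - c) = ip a b - ip a c"
  unfolding ip_def by (simp add: right_diff_distrib integral_diff[OF int_pp int_pp])

lemma ip_smult: "ip a (smult c b) = c * ip a b"
  unfolding ip_def by (simp add: mult.left_commute)

lemma ip_zero[simp]: "ip a 0 = 0"
  unfolding ip_def by simp

lemma ip_sym: "ip a b = ip b a"
  unfolding ip_def by (simp add: mult.commute)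

lemma ip_on: "orthonormal_legendre p \<Longrightarrow> ip (p k) (p l) = (if k = l then 1 else 0)"
  unfolding ip_def orthonormal_legendre_def by blast

lemma lc_pos: "orthonormal_legendre p \<Longrightarrow> lead_coeff (p k) > 0"
  and deg_p: "orthonormal_legendre p \<Longrightarrow> degree (p k) = k"
  unfolding orthonormal_legendre_def by blast+

lemma degree_le_from_coeff:
  assumes "degree (q::real poly) \<le> Suc n" "coeff q (Suc n) = 0"
  shows "degree q \<le> n"
proof (rule degree_le, intro allI impI)
  fix i assume "n < i"
  then consider "i = Suc n" | "i > Suc n" by linarith
  thus "coeff q i = 0" using assms by cases (auto intro: coeff_eq_0)
qed

lemma p0_const: "orthonormal_legendre p \<Longrightarrow> p 0 = [:lead_coeff (p 0):]"
  using degree_0_id[of "p 0"] deg_p[of p 0] by simp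

lemma deg0_smult_p0:
  assumes on: "orthonormal_legendre p" and "degree (q::real poly) = 0"
  shows "q = smult (coeff q 0 / lead_coeff (p 0)) (p 0)"
proof -
  have "q = [:coeff q 0:]" using assms(2) by (metis degree_0_id)
  also have "\<dots> = smult (coeff q 0 / lead_coeff (p 0)) (p 0)"
  proof -
    obtain c where c: "p 0 = [:c:]" using degree0_coeffs deg_p[OF on, of 0] by blast
    show ?thesis using lc_pos[OF on, of 0] unfolding c by simp
  qed
  finally show ?thesis .
qed

lemma orth_lower:
  assumes on: "orthonormal_legendre p" and "degree q < k"
  shows "ip (p k) q = 0"
proof -
  have "\<forall>q. degree q \<le> n \<longrightarrow> n < k \<longrightarrow> ip (p k) q = 0" for n
  proof (induction n)
    case 0
    show ?case
    proof (intro allI impI)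
      fix q :: "real poly" assume "degree q \<le> 0" "0 < k"
      hence "q = smult (coeff q 0 / lead_coeff (p 0)) (p 0)" using deg0_smult_p0[OF on] by simp
      thus "ip (p k) q = 0" using \<open>0 < k\<close> by (metis ip_smult ip_on[OF on] mult_zero_right neq0_conv)
    qed
  next
    case (Suc n)
    show ?case
    proof (intro allI impI)
      fix q :: "real poly" assume q: "degree q \<le> Suc n" "Suc n < k"
      define c where "c = coeff q (Suc n) / lead_coeff (p (Suc n))"
      define q' where "q' = q - smult c (p (Suc n))"
      have "coeff q' (Suc n) = 0" unfolding q'_def c_def using lc_pos[OF on, of "Suc n"] deg_p[OF on, of "Suc n"]
        by simp
      moreover have "degree q' \<le> Suc n" unfolding q'_def using q deg_p[OF on, of "Suc n"]
        by (metis degree_diff_le degree_smult_le order_trans)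
      ultimately have "degree q' \<le> n" by (rule degree_le_from_coeff[rotated])
      hence "ip (p k) q' = 0" using Suc.IH q by simp
      moreover have "q = q' + smult c (p (Suc n))" unfolding q'_def by simp
      ultimately show "ip (p k) q = 0" using q by (simp add: ip_add ip_smult ip_on[OF on])
    qed
  qed
  thus ?thesis using assms(2) by blast
qed

lemma ip_top:
  assumes on: "orthonormal_legendre p" and "degree q \<le> k"
  shows "ip (p k) q = coeff q k / lead_coeff (p k)"
proof -
  define c where "c = coeff q k / lead_coeff (p k)"
  define q' where "q' = q - smult c (p k)"
  have cq: "coeff q' k = 0" unfolding q'_def c_def using lc_pos[OF on, of k] deg_p[OF on, of k]
    by simp
  have dq: "degree q' \<le> k" unfolding q'_def using assms deg_p[OF on, of k]
    by (metis degree_diff_le degree_smult_le order_trans)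
  have "ip (p k) q' = 0"
  proof (cases k)
    case 0
    then have "q' = 0" using cq dq by (metis degree_0_id le_zero_eq pCons_0_0)
    thus ?thesis by simp
  next
    case (Suc n)
    thus ?thesis using degree_le_from_coeff[of q' n] cq dq orth_lower[OF on, of q' k] by simp
  qed
  moreover have "q = q' + smult c (p k)" unfolding q'_def by simp
  ultimately have "ip (p k) q = c" by (simp add: ip_add ip_smult ip_on[OF on])
  thus ?thesis by (simp add: c_def)
qed

lemma zero_if_orth:
  assumes on: "orthonormal_legendre p"
  shows "degree S \<le> n \<Longrightarrow> (\<forall>j\<le>n. ip (p j) S = 0) \<Longrightarrow> S = 0"
proof (induction n arbitrary: S)
  case 0
  have "ip (p 0) S = 0" using 0 by simp
  then have "coeff S 0 = 0" using 0 ip_top[OF on, of S 0] lc_pos[OF on, of 0] by auto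
  thus ?case using 0 by (metis degree_0_id le_zero_eq pCons_0_0)
next
  case (Suc n)
  have "ip (p (Suc n)) S = 0" using Suc.prems by simp
  then have "coeff S (Suc n) = 0" using Suc.prems ip_top[OF on, of S "Suc n"] lc_pos[OF on, of "Suc n"] by auto
  hence "degree S \<le> n" using Suc.prems degree_le_from_coeff by blast
  thus ?case using Suc by simp
qed

lemma bound_F:
  assumes on: "orthonormal_legendre p" and h: "continuous_on {-1..1} h"
    and M: "\<And>x. x \<in> {-1..1} \<Longrightarrow> \<bar>h x\<bar> \<le> M"
  shows "\<bar>integral {-1..1} (\<lambda>t. h t * poly (p k) t * poly (p j) t)\<bar> \<le> M"
proof -
  have M0: "0 \<le> M" using M[of 0] by simp
  let ?g = "\<lambda>t. M / 2 * (poly (p k) t * poly (p k) t + poly (p j) t * poly (p j) t)"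
  have "norm (integral {-1..1} (\<lambda>t. h t * poly (p k) t * poly (p j) t)) \<le> integral {-1..1} ?g"
  proof (rule integral_norm_bound_integral)
    show "(\<lambda>t. h t * poly (p k) t * poly (p j) t) integrable_on {-1..1}"
      by (intro integrable_continuous_real continuous_intros h)
    show "?g integrable_on {-1..1}"
      by (intro integrable_continuous_real continuous_intros)
    fix x :: real assume x: "x \<in> {-1..1}"
    let ?a = "poly (p k) x" and ?b = "poly (p j) x"
    have "norm (h x * ?a * ?b) = \<bar>h x\<bar> * \<bar>?a * ?b\<bar>" by (simp add: abs_mult)
    also have "\<dots> \<le> M * \<bar>?a * ?b\<bar>" by (intro mult_right_mono M x) simp
    also have "\<bar>?a * ?b\<bar> \<le> (?a * ?a + ?b * ?b) / 2"
    proof -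
      have "0 \<le> (\<bar>?a\<bar> - \<bar>?b\<bar>)^2" by simp
      hence "2*(\<bar>?a\<bar>*\<bar>?b\<bar>) \<le> \<bar>?a\<bar>*\<bar>?a\<bar> + \<bar>?b\<bar>*\<bar>?b\<bar>"
        by (simp add: power2_eq_square algebra_simps)
      thus ?thesis by (simp add: abs_mult abs_mult_self_eq)
    qed
    hence "M * \<bar>?a * ?b\<bar> \<le> M * ((?a * ?a + ?b * ?b) / 2)" by (intro mult_left_mono M0)
    finally show "norm (h x * ?a * ?b) \<le> ?g x" by simp
  qed
  also have "integral {-1..1} ?g = M / 2 * (ip (p k) (p k) + ip (p j) (p j))"
    unfolding ip_def by (simp add: integral_add[OF int_pp int_pp])
  also have "\<dots> = M" using ip_on[OF on] by simp
  finally show ?thesis by simp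
qed


definition Q :: "(nat \<Rightarrow> real poly) \<Rightarrow> nat \<Rightarrow> real poly" where
  "Q p l = pint (p l) - [:poly (pint (p l)) (-1):]"

lemma pderiv_Q: "pderiv (Q p l) = p l"
  unfolding Q_def by (simp add: pderiv_diff pderiv_pint pderiv_pCons)

lemma Q_m1: "poly (Q p l) (-1) = 0"
  unfolding Q_def by simp

lemma degree_Q: "orthonormal_legendre p \<Longrightarrow> degree (Q p l) \<le> Suc l"
  unfolding Q_def using degree_pint[of "p l"] deg_p[of p l]
  by (metis (no_types, lifting) degree_diff_le degree_pCons_0 le_zero_eq zero_le order_trans
      not_less_eq_eq)

lemma coeff_Q: "orthonormal_legendre p \<Longrightarrow> coeff (Q p l) (Suc l) = lead_coeff (p l) / real (Suc l)"
  unfolding Q_def by (simp add: coeff_pint_Suc deg_p)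

lemma ftc_poly2:
  assumes "a \<le> b"
  shows "integral {a..b} (poly (pderiv (A::real poly))) = poly A b - poly A a"
proof -
  have "(poly (pderiv A) has_integral (poly A b - poly A a)) {a..b}"
    by (rule fundamental_theorem_of_calculus[of a b "poly A" "poly (pderiv A)"])
       (auto simp: assms has_real_derivative_iff_has_vector_derivative[symmetric] intro!: DERIV_subset[OF poly_DERIV])
  thus ?thesis by (rule integral_unique)
qed

lemma Q_1:
  assumes on: "orthonormal_legendre p" and "l \<ge> 1"
  shows "poly (Q p l) 1 = 0"
proof -
  have "poly (Q p l) 1 = integral {-1..1} (poly (p l))"
    using ftc_poly[of "Q p l"] by (simp add: pderiv_Q Q_m1)
  also have "\<dots> = ip (p l) [:1:]" unfolding ip_def by simp
  also have "\<dots> = 0" using orth_lower[OF on, of "[:1:]" l] assms(2) by simp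
  finally show ?thesis .
qed

lemma parts:
  "ip (Q p a) (p j) + ip (p a) (Q p j) = poly (Q p a) 1 * poly (Q p j) 1"
proof -
  have "integral {-1..1} (poly (pderiv (Q p a * Q p j))) = poly (Q p a) 1 * poly (Q p j) 1"
    using ftc_poly[of "Q p a * Q p j"] by (simp add: Q_m1)
  moreover have "integral {-1..1} (poly (pderiv (Q p a * Q p j))) = ip (Q p a) (p j) + ip (p a) (Q p j)"
    unfolding ip_def pderiv_mult pderiv_Q poly_add poly_mult
    by (subst integral_add[OF int_pp int_pp, symmetric]) (simp add: mult.commute)
  ultimately show ?thesis by simp
qed

lemma parts1:
  assumes on: "orthonormal_legendre p" and "l \<ge> 1"
  shows "ip (Q p l) (p j) = - ip (p l) (Q p j)"
  using parts[of p l j] Q_1[OF assms] by simp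

lemma ratio_le:
  assumes on: "orthonormal_legendre p"
  shows "lead_coeff (p n) / lead_coeff (p (Suc n)) \<le> 1"
proof -
  have "ip (p (Suc n)) (pCons 0 (p n)) = lead_coeff (p n) / lead_coeff (p (Suc n))"
    using ip_top[OF on, of "pCons 0 (p n)" "Suc n"] deg_p[OF on] by (simp add: degree_pCons_eq_if)
  moreover have "ip (p (Suc n)) (pCons 0 (p n)) = integral {-1..1} (\<lambda>t. t * poly (p n) t * poly (p (Suc n)) t)"
    unfolding ip_def by (simp add: mult_ac)
  moreover have "\<bar>integral {-1..1} (\<lambda>t. t * poly (p n) t * poly (p (Suc n)) t)\<bar> \<le> 1"
    by (rule bound_F[OF on]) (auto intro: continuous_intros)
  ultimately show ?thesis by (metis abs_divide abs_ge_self order_trans)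
qed


lemma decomp:
  assumes on: "orthonormal_legendre p"
  shows "Q p (Suc n) = smult (ip (Q p (Suc n)) (p (Suc (Suc n)))) (p (Suc (Suc n)))
                     + smult (ip (Q p (Suc n)) (p n)) (p n)"
proof -
  define a where "a = ip (Q p (Suc n)) (p (Suc (Suc n)))"
  define b where "b = ip (Q p (Suc n)) (p n)"
  define S where "S = Q p (Suc n) - smult a (p (Suc (Suc n))) - smult b (p n)"
  have dS: "degree S \<le> Suc (Suc n)" unfolding S_def using degree_Q[OF on, of "Suc n"] deg_p[OF on]
    by (intro degree_diff_le) (auto intro: order_trans[OF degree_smult_le])
  have "S = 0"
  proof (rule zero_if_orth[OF on dS], intro allI impI)
    fix j assume j: "j \<le> Suc (Suc n)"
    have e: "ip (p j) S = ip (Q p (Suc n)) (p j) - a * ip (p j) (p (Suc (Suc n))) - b * ip (p j) (p n)"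
      unfolding S_def by (simp add: ip_diff ip_smult ip_sym[of "p j" "Q p (Suc n)"])
    consider "j = Suc (Suc n)" | "j = Suc n" | "j = n" | "j < n" using j by linarith
    thus "ip (p j) S = 0"
    proof cases
      case 1 thus ?thesis using e by (simp add: ip_on[OF on] a_def)
    next
      case 2
      have "ip (Q p (Suc n)) (p (Suc n)) = - ip (p (Suc n)) (Q p (Suc n))" by (rule parts1[OF on]) simp
      hence "ip (Q p (Suc n)) (p (Suc n)) = 0" by (simp add: ip_sym)
      thus ?thesis using e 2 by (simp add: ip_on[OF on])
    next
      case 3 thus ?thesis using e by (simp add: ip_on[OF on] b_def)
    next
      case 4
      have "ip (Q p (Suc n)) (p j) = - ip (p (Suc n)) (Q p j)" by (rule parts1[OF on]) simp
      also have "ip (p (Suc n)) (Q p j) = 0"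
        using orth_lower[OF on] degree_Q[OF on, of j] 4 by (meson le_less_trans Suc_less_eq)
      finally show ?thesis using e 4 by (simp add: ip_on[OF on])
    qed
  qed
  thus ?thesis unfolding S_def a_def b_def by (simp add: algebra_simps)
qed

lemma frac_bound: "0 \<le> (r::real) \<Longrightarrow> r \<le> 1 \<Longrightarrow> \<bar>r / real (Suc n)\<bar> \<le> 1 / real (Suc n)"
  by (simp add: divide_right_mono)

lemma a_bound:
  assumes on: "orthonormal_legendre p"
  shows "\<bar>ip (Q p (Suc n)) (p (Suc (Suc n)))\<bar> \<le> 1 / real (Suc (Suc n))"
proof -
  have "ip (Q p (Suc n)) (p (Suc (Suc n))) = coeff (Q p (Suc n)) (Suc (Suc n)) / lead_coeff (p (Suc (Suc n)))"
    using ip_top[OF on degree_Q[OF on]] by (simp add: ip_sym)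
  also have "\<dots> = (lead_coeff (p (Suc n)) / lead_coeff (p (Suc (Suc n)))) / real (Suc (Suc n))"
    using coeff_Q[OF on, of "Suc n"] by simp
  finally have e: "ip (Q p (Suc n)) (p (Suc (Suc n))) = \<dots>" .
  have "0 \<le> lead_coeff (p (Suc n)) / lead_coeff (p (Suc (Suc n)))"
    using lc_pos[OF on] by (simp add: less_imp_le)
  thus ?thesis unfolding e using ratio_le[OF on, of "Suc n"] frac_bound[of _ "Suc n"] by blast
qed

lemma b_bound:
  assumes on: "orthonormal_legendre p"
  shows "\<bar>ip (Q p (Suc n)) (p n)\<bar> \<le> 1 / real (Suc n)"
proof -
  have "ip (Q p (Suc n)) (p n) = - ip (p (Suc n)) (Q p n)" by (rule parts1[OF on]) simp
  also have "ip (p (Suc n)) (Q p n) = coeff (Q p n) (Suc n) / lead_coeff (p (Suc n))"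
    using ip_top[OF on degree_Q[OF on]] by simp
  also have "\<dots> = (lead_coeff (p n) / lead_coeff (p (Suc n))) / real (Suc n)"
    using coeff_Q[OF on, of n] by simp
  finally have e: "ip (Q p (Suc n)) (p n) = - \<dots>" .
  have "0 \<le> lead_coeff (p n) / lead_coeff (p (Suc n))"
    using lc_pos[OF on] by (simp add: less_imp_le)
  thus ?thesis unfolding e abs_minus_cancel using ratio_le[OF on, of n] frac_bound[of _ n] by blast
qed

lemma inner_eq:
  assumes on: "orthonormal_legendre p" and t: "\<tau> \<in> {-1..1::real}"
  shows "integral {-1..1} (\<lambda>\<rho>. ft \<tau> * heaviside (\<tau> - \<rho>) * poly (p k) \<tau> * poly (p l) \<rho>)
       = ft \<tau> * poly (p k) \<tau> * poly (Q p l) \<tau>"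
proof -
  have "integral {-1..1} (\<lambda>\<rho>. ft \<tau> * heaviside (\<tau> - \<rho>) * poly (p k) \<tau> * poly (p l) \<rho>)
      = integral {-1..1} (\<lambda>\<rho>. (ft \<tau> * poly (p k) \<tau>) * (if \<rho> \<in> {-1..\<tau>} then poly (p l) \<rho> else 0))"
    by (rule Henstock_Kurzweil_Integration.integral_cong) (auto simp: heaviside_def)
  also have "\<dots> = (ft \<tau> * poly (p k) \<tau>) * integral {-1..1} (\<lambda>\<rho>. if \<rho> \<in> {-1..\<tau>} then poly (p l) \<rho> else 0)"
    by (rule integral_mult_right)
  also have "integral {-1..1} (\<lambda>\<rho>. if \<rho> \<in> {-1..\<tau>} then poly (p l) \<rho> else 0) = integral ({-1..\<tau>} \<inter> {-1..1}) (poly (p l))"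
    by (rule integral_restrict_Int)
  also have "{-1..\<tau>} \<inter> {-1..1} = {-1..\<tau>}" using t by auto
  also have "integral {-1..\<tau>} (poly (p l)) = poly (Q p l) \<tau>"
    using ftc_poly2[of "-1" \<tau> "Q p l"] t by (simp add: pderiv_Q Q_m1)
  finally show ?thesis by simp
qed

lemma cm_eq:
  assumes on: "orthonormal_legendre p"
  shows "coeff_matrix p (\<lambda>t s. ft t * heaviside (t - s)) k l
       = integral {-1..1} (\<lambda>\<tau>. ft \<tau> * poly (p k) \<tau> * poly (Q p l) \<tau>)"
  unfolding coeff_matrix_def
  by (rule Henstock_Kurzweil_Integration.integral_cong) (simp add: inner_eq[OF on])

lemma main_bound:
  assumes on: "orthonormal_legendre p" and c: "continuous_on {-1..1} ft"
    and M: "\<And>x. x \<in> {-1..1} \<Longrightarrow> \<bar>ft x\<bar> \<le> M"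
  shows "\<bar>coeff_matrix p (\<lambda>t s. ft t * heaviside (t - s)) k (Suc n)\<bar> \<le> 2 * M / real (Suc n)"
proof -
  define a where "a = ip (Q p (Suc n)) (p (Suc (Suc n)))"
  define b where "b = ip (Q p (Suc n)) (p n)"
  define I1 where "I1 = integral {-1..1} (\<lambda>\<tau>. ft \<tau> * poly (p k) \<tau> * poly (p (Suc (Suc n))) \<tau>)"
  define I2 where "I2 = integral {-1..1} (\<lambda>\<tau>. ft \<tau> * poly (p k) \<tau> * poly (p n) \<tau>)"
  have M0: "0 \<le> M" using M[of 0] by simp
  have "coeff_matrix p (\<lambda>t s. ft t * heaviside (t - s)) k (Suc n)
      = integral {-1..1} (\<lambda>\<tau>. a * (ft \<tau> * poly (p k) \<tau> * poly (p (Suc (Suc n))) \<tau>)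
                               + b * (ft \<tau> * poly (p k) \<tau> * poly (p n) \<tau>))"
    unfolding cm_eq[OF on] a_def b_def
    by (subst decomp[OF on]) (simp add: algebra_simps)
  also have "\<dots> = a * I1 + b * I2"
    unfolding I1_def I2_def
    by (subst integral_add) (auto intro!: integrable_continuous_real continuous_intros c)
  finally have e: "coeff_matrix p (\<lambda>t s. ft t * heaviside (t - s)) k (Suc n) = a * I1 + b * I2" .
  have i1: "\<bar>I1\<bar> \<le> M" unfolding I1_def by (rule bound_F[OF on c M])
  have i2: "\<bar>I2\<bar> \<le> M" unfolding I2_def by (rule bound_F[OF on c M])
  have ab: "\<bar>a\<bar> \<le> 1 / real (Suc n)"
    using a_bound[OF on, of n] unfolding a_def
    by (smt (verit, best) frac_le of_nat_0_less_iff of_nat_le_iff le_SucI order_refl zero_less_Suc)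
  have bb: "\<bar>b\<bar> \<le> 1 / real (Suc n)" using b_bound[OF on, of n] unfolding b_def .
  have "\<bar>a * I1 + b * I2\<bar> \<le> \<bar>a\<bar> * \<bar>I1\<bar> + \<bar>b\<bar> * \<bar>I2\<bar>" unfolding abs_mult[symmetric] by (rule abs_triangle_ineq)
  also have "\<dots> \<le> 1 / real (Suc n) * M + 1 / real (Suc n) * M"
    by (intro add_mono mult_mono ab bb i1 i2 M0) auto
  finally show ?thesis unfolding e by simp
qed


lemma ft_cont:
  assumes "real_analytic_on_interval ft"
  shows "continuous_on {-1..1} ft"
proof -
  obtain g where g: "g analytic_on (complex_of_real ` {-1..1})"
    and e: "\<forall>x\<in>{-1..1}. g (complex_of_real x) = complex_of_real (ft x)"
    using assms unfolding real_analytic_on_interval_def by blast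
  have gc: "continuous_on (complex_of_real ` {-1..1}) g"
    by (rule holomorphic_on_imp_continuous_on[OF analytic_imp_holomorphic[OF g]])
  have "continuous_on {-1..1} (\<lambda>x. Re (g (complex_of_real x)))"
    by (intro continuous_intros continuous_on_compose2[OF gc]) auto
  moreover have "\<And>x. x \<in> {-1..1} \<Longrightarrow> Re (g (complex_of_real x)) = ft x" using e by simp
  ultimately show ?thesis using continuous_on_cong by (metis (no_types, lifting))
qed

theorem corollary3p3:
  fixes ft :: "real \<Rightarrow> real" and p :: "nat \<Rightarrow> real poly" and m :: int
  assumes "orthonormal_legendre p"
    and "real_analytic_on_interval ft"
  shows "(\<lambda>l::nat. \<bar>coeff_matrix p (\<lambda>t s. ft t * heaviside (t - s)) (nat (int l + m)) l\<bar>)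
           \<in> O(\<lambda>l. 1 / real l)"
proof -
  have c: "continuous_on {-1..1} ft" by (rule ft_cont[OF assms(2)])
  obtain M where M: "\<And>x. x \<in> {-1..1} \<Longrightarrow> norm (ft x) \<le> M"
    using continuous_on_compact_bound[OF compact_Icc c] by blast
  show ?thesis
  proof (rule bigoI[where c = "2 * M"])
    show "\<forall>\<^sub>F l in at_top. norm \<bar>coeff_matrix p (\<lambda>t s. ft t * heaviside (t - s)) (nat (int l + m)) l\<bar>
           \<le> 2 * M * norm (1 / real l)"
      unfolding eventually_at_top_linorder
    proof (intro exI[of _ 1] allI impI)
      fix l :: nat assume "l \<ge> 1"
      then obtain n where l: "l = Suc n" by (cases l) auto
      have "\<bar>coeff_matrix p (\<lambda>t s. ft t * heaviside (t - s)) (nat (int l + m)) (Suc n)\<bar> \<le> 2 * M / real (Suc n)"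
        by (rule main_bound[OF assms(1) c]) (use M in auto)
      thus "norm \<bar>coeff_matrix p (\<lambda>t s. ft t * heaviside (t - s)) (nat (int l + m)) l\<bar>
           \<le> 2 * M * norm (1 / real l)" using l by simp
    qed
  qed
qed

end
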